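(* Let $X$ be an $\operatorname{Irr}$-continuous $T_0$ space. Then for every $x\in X$, $$x=\bigvee\bigcup\{\twoheaddownarrow_{\operatorname{Irr}} y \mid y\ll_{\operatorname{Irr}} x\}.$$
   Context: For a topological space $X$, a nonempty subset $E$ is irreducible if whenever $E\subseteq A_1\cup A_2$ with $A_1,A_2$ closed, $E\subseteq A_1$ or $E\subseteq A_2$. The specialisation order is $x\le y$ iff $x\in\operatorname{cl}(\{y\})$; $\uparrow x=\{z:z\ge x\}$; $\bigvee$ denotes supremum in this order. $\operatorname{Irr}^+(X)$ is the set of irreducible subsets of $X$ whose supremum exists. $x\ll_{\operatorname{Irr}} y$ iff for every $E\in\operatorname{Irr}^+(X)$ with $\bigvee E\ge y$, $E\cap\uparrow x\ne\emptyset$; $\twoheaddownarrow_{\operatorname{Irr}} x=\{y:y\ll_{\operatorname{Irr}} x\}$. $X$ is $\operatorname{Irr}$-continuous if for every $x$, $\twoheaddownarrow_{\operatorname{Irr}} x$ is irreducible and $x=\bigvee\twoheaddownarrow_{\operatorname{Irr}} x$. *)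

theory Defs
  imports "HOL-Analysis.Analysis"
begin

definition irreducible_in :: "'a topology \<Rightarrow> 'a set \<Rightarrow> bool" where
  "irreducible_in X E \<longleftrightarrow> E \<noteq> {} \<and> E \<subseteq> topspace X \<and>
     (\<forall>A1 A2. closedin X A1 \<and> closedin X A2 \<and> E \<subseteq> A1 \<union> A2 \<longrightarrow> E \<subseteq> A1 \<or> E \<subseteq> A2)"

definition spec_le :: "'a topology \<Rightarrow> 'a \<Rightarrow> 'a \<Rightarrow> bool" where
  "spec_le X x y \<longleftrightarrow> x \<in> topspace X \<and> y \<in> topspace X \<and> x \<in> X closure_of {y}"

definition up_set :: "'a topology \<Rightarrow> 'a \<Rightarrow> 'a set" where
  "up_set X x = {z \<in> topspace X. spec_le X x z}"

definition is_sup :: "'a topology \<Rightarrow> 'a set \<Rightarrow> 'a \<Rightarrow> bool" where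
  "is_sup X E s \<longleftrightarrow> s \<in> topspace X \<and> (\<forall>e\<in>E. spec_le X e s) \<and>
     (\<forall>u\<in>topspace X. (\<forall>e\<in>E. spec_le X e u) \<longrightarrow> spec_le X s u)"

definition Irr_plus :: "'a topology \<Rightarrow> 'a set set" where
  "Irr_plus X = {E. irreducible_in X E \<and> (\<exists>s. is_sup X E s)}"

definition way_below_Irr :: "'a topology \<Rightarrow> 'a \<Rightarrow> 'a \<Rightarrow> bool" where
  "way_below_Irr X x y \<longleftrightarrow> x \<in> topspace X \<and> y \<in> topspace X \<and>
     (\<forall>E\<in>Irr_plus X. \<forall>s. is_sup X E s \<and> spec_le X y s \<longrightarrow> E \<inter> up_set X x \<noteq> {})"

definition ddown_Irr :: "'a topology \<Rightarrow> 'a \<Rightarrow> 'a set" where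
  "ddown_Irr X x = {y \<in> topspace X. way_below_Irr X y x}"

definition Irr_continuous :: "'a topology \<Rightarrow> bool" where
  "Irr_continuous X \<longleftrightarrow> (\<forall>x\<in>topspace X. irreducible_in X (ddown_Irr X x) \<and> is_sup X (ddown_Irr X x) x)"

end

theory Submission
  imports Defs
begin

lemma spec_refl: "y \<in> topspace X \<Longrightarrow> spec_le X y y"
  unfolding spec_le_def by (meson closure_of_subset empty_subsetI insert_subset singletonI subsetD)

lemma spec_trans: "spec_le X a b \<Longrightarrow> spec_le X b c \<Longrightarrow> spec_le X a c"
  unfolding spec_le_def
  by (metis closure_of_minimal closedin_closure_of empty_subsetI insert_subset subsetD)

lemma wb_le: assumes "way_below_Irr X z y" shows "spec_le X z y"
proof -
  have y: "y \<in> topspace X" and z: "z \<in> topspace X" using assms by (auto simp: way_below_Irr_def)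
  have irr: "irreducible_in X {y}" using y unfolding irreducible_in_def by auto
  have sup: "is_sup X {y} y" using y spec_refl unfolding is_sup_def by auto
  hence "{y} \<in> Irr_plus X" using irr unfolding Irr_plus_def by auto
  hence "{y} \<inter> up_set X z \<noteq> {}" using assms sup spec_refl[OF y] unfolding way_below_Irr_def by blast
  thus ?thesis unfolding up_set_def by auto
qed

theorem lemma3p4:
  fixes X :: "'a topology"
  assumes "Irr_continuous X" and "t0_space X" and "x \<in> topspace X"
  shows "is_sup X (\<Union>{ddown_Irr X y | y. way_below_Irr X y x}) x"
proof -
  let ?U = "\<Union>{ddown_Irr X y | y. way_below_Irr X y x}"
  have ub: "\<forall>e\<in>?U. spec_le X e x"
  proof
    fix e assume "e \<in> ?U"
    then obtain y where y: "way_below_Irr X y x" "e \<in> ddown_Irr X y" by auto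
    hence "way_below_Irr X e y" unfolding ddown_Irr_def by auto
    thus "spec_le X e x" using y(1) wb_le spec_trans by metis
  qed
  have least: "\<forall>u\<in>topspace X. (\<forall>e\<in>?U. spec_le X e u) \<longrightarrow> spec_le X x u"
  proof (intro ballI impI)
    fix u assume u: "u \<in> topspace X" and h: "\<forall>e\<in>?U. spec_le X e u"
    have "\<forall>y\<in>ddown_Irr X x. spec_le X y u"
    proof
      fix y assume yd: "y \<in> ddown_Irr X x"
      hence yt: "y \<in> topspace X" and yw: "way_below_Irr X y x" unfolding ddown_Irr_def by auto
      have "is_sup X (ddown_Irr X y) y" using assms(1) yt unfolding Irr_continuous_def by auto
      moreover have "\<forall>e\<in>ddown_Irr X y. spec_le X e u" using h yw by blast
      ultimately show "spec_le X y u" using u unfolding is_sup_def by blast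
    qed
    moreover have "is_sup X (ddown_Irr X x) x" using assms(1,3) unfolding Irr_continuous_def by auto
    ultimately show "spec_le X x u" using u unfolding is_sup_def by blast
  qed
  show ?thesis unfolding is_sup_def using assms(3) ub least by blast
qed

end
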